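(* Let $p$ be a prime, identify $V=\mathbb{F}_p^d$ with $\mathbb{F}_{p^d}$, let $\omega$ be a primitive element of $\mathbb{F}_{p^d}$, let $\hat\omega$ be the map $x\mapsto x\omega$ and $\varphi$ the map $x\mapsto x^p$, so $\Gamma L_1(p^d)=\langle\hat\omega,\varphi\rangle$. Suppose $H\le\Gamma L_1(p^d)$ is $p$-exceptional on $V$. Then $p$ divides $d$, and there is a factorisation $d=p^ks$ with $k\ge1$ and an integer $j$ dividing $p^s-1$ such that $K=\langle\hat\omega^{(p^s-1)/j},\varphi^s\rangle$ is a normal subgroup of $H$ of index coprime to $p$. Conversely, for any such $d=p^ks$ ($k\ge1$) and $j\mid p^s-1$, the group $K=\langle\hat\omega^{(p^s-1)/j},\varphi^s\rangle$ is $p$-exceptional and $\frac12$-transitive on $V^\sharp$, having $(p^s-1)/j$ orbits on $V^\sharp$, each of length $j(p^d-1)/(p^s-1)$; any subgroup of $\Gamma L_1(p^d)$ containing such a $K$ with index coprime to $p$ and meeting $\langle\hat\omega\rangle$ in $K\cap\langle\hat\omega\rangle$ is $p$-exceptional; and each such $K$ contains the $p$-exceptional group $\langle\hat\omega^{p^{d/p}-1},\varphi^{d/p}\rangle$.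
   Context: $G$ is $p$-exceptional on $V$ if $p$ divides $|G|$ and every orbit of $G$ on $V$ has size coprime to $p$. $V^\sharp$ is the set of nonzero vectors. $G$ is $\frac12$-transitive if all its orbits on $V^\sharp$ have equal size. *)

theory Defs
  imports "HOL-Algebra.Algebra"
begin

text \<open>The vector space V = F_p^d is identified with a finite field of type 'a
  of cardinality p^d. Semilinear maps are represented as functions 'a => 'a,
  with group operation composition.\<close>

text \<open>Subgroup (of the permutations of 'a) generated by a set S of maps:
  closure of S under composition, containing the identity.  For bijections of a
  finite set this is the generated group.\<close>
inductive_set gen :: "('a \<Rightarrow> 'a) set \<Rightarrow> ('a \<Rightarrow> 'a) set" for S where
  gen_id: "id \<in> gen S"
| gen_comp: "f \<in> S \<Longrightarrow> g \<in> gen S \<Longrightarrow> f \<circ> g \<in> gen S"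

definition fgroup :: "('a \<Rightarrow> 'a) set \<Rightarrow> ('a \<Rightarrow> 'a) monoid" where
  "fgroup H = \<lparr>carrier = H, monoid.mult = (\<circ>), one = id\<rparr>"

definition primitive_element :: "'a::field \<Rightarrow> bool" where
  "primitive_element w \<longleftrightarrow> w \<noteq> 0 \<and> (\<forall>x. x \<noteq> 0 \<longrightarrow> (\<exists>n::nat. x = w ^ n))"

definition omega_hat :: "'a::field \<Rightarrow> 'a \<Rightarrow> 'a" where
  "omega_hat w = (\<lambda>x. x * w)"

definition frob :: "nat \<Rightarrow> 'a::field \<Rightarrow> 'a" where
  "frob p = (\<lambda>x. x ^ p)"

definition GammaL1 :: "nat \<Rightarrow> 'a::field \<Rightarrow> ('a \<Rightarrow> 'a) set" where
  "GammaL1 p w = gen {omega_hat w, frob p}"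

definition orbit :: "('a \<Rightarrow> 'a) set \<Rightarrow> 'a \<Rightarrow> 'a set" where
  "orbit H v = {h v | h. h \<in> H}"

definition p_exceptional :: "nat \<Rightarrow> ('a \<Rightarrow> 'a) set \<Rightarrow> bool" where
  "p_exceptional p H \<longleftrightarrow> p dvd card H \<and> (\<forall>v. coprime (card (orbit H v)) p)"

definition half_transitive :: "('a::zero \<Rightarrow> 'a) set \<Rightarrow> bool" where
  "half_transitive H \<longleftrightarrow>
     (\<forall>u v. u \<noteq> 0 \<longrightarrow> v \<noteq> 0 \<longrightarrow> card (orbit H u) = card (orbit H v))"

definition nonzero_orbits :: "('a::zero \<Rightarrow> 'a) set \<Rightarrow> 'a set set" where
  "nonzero_orbits H = {orbit H v | v. v \<noteq> 0}"

end

theory Submission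
  imports Defs "HOL-Algebra.Group_Action"
begin



locale GL =
  fixes p d :: nat and w :: "'a::{field,finite}"
  assumes prime: "Factorial_Ring.prime p" and cardU: "card (UNIV :: 'a set) = p ^ d"
    and prim: "primitive_element w"
begin

definition N :: nat where "N = p ^ d - 1"

definition T :: "nat \<Rightarrow> nat \<Rightarrow> 'a \<Rightarrow> 'a" where
  "T a i = (\<lambda>x. w ^ a * x ^ (p ^ i))"

lemma p_ge2: "p \<ge> 2" using prime prime_ge_2_nat by blast

lemma d_pos: "d > 0"
proof (rule ccontr)
  assume "\<not> d > 0"
  then have "card (UNIV :: 'a set) = 1" using cardU by simp
  then obtain x where "UNIV = {x :: 'a}" using card_1_singletonE by blast
  then have "(0::'a) = 1" by (metis UNIV_I singletonD)
  then show False by simp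
qed

lemma N_pos: "N > 0"
proof -
  have "p ^ d \<ge> p ^ 1" using p_ge2 d_pos by (intro power_increasing) auto
  then show ?thesis using p_ge2 unfolding N_def by simp
qed

lemma w_nz: "w \<noteq> 0" using prim unfolding primitive_element_def by auto

lemma w_pow_nz: "w ^ n \<noteq> 0" using w_nz by simp

lemma card_nz: "card {x :: 'a. x \<noteq> 0} = N"
proof -
  have "{x :: 'a. x \<noteq> 0} = UNIV - {0}" by auto
  then show ?thesis unfolding N_def using cardU by (simp add: card_Diff_singleton)
qed

lemma exists_period: "\<exists>q>0. w ^ q = 1"
proof -
  have "\<not> inj (\<lambda>n::nat. w ^ n)"
  proof
    assume "inj (\<lambda>n::nat. w ^ n)"
    then have "finite (UNIV :: nat set)"
      using finite_imageD[of "\<lambda>n::nat. w ^ n" UNIV] by simp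
    then show False by simp
  qed
  then obtain a b :: nat where ab: "a \<noteq> b" "w ^ a = w ^ b" unfolding inj_def by blast
  { fix a b :: nat assume "a < b" "w ^ a = w ^ b"
    have "w ^ a * w ^ (b - a) = w ^ (a + (b - a))" by (simp add: power_add)
    also have "\<dots> = w ^ b" using \<open>a < b\<close> by simp
    finally have "w ^ a * w ^ (b - a) = w ^ a * 1" using \<open>w ^ a = w ^ b\<close> by simp
    then have "w ^ (b - a) = 1" using w_nz by simp
    then have "\<exists>q>0. w ^ q = 1" using \<open>a < b\<close> by (intro exI[of _ "b - a"]) auto }
  note * = this
  show ?thesis using ab *[of a b] *[of b a] by (cases "a < b") auto
qed

definition ordw :: nat where "ordw = (LEAST q. q > 0 \<and> w ^ q = 1)"

lemma ordw: "ordw > 0" "w ^ ordw = 1"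
  using LeastI_ex[OF exists_period] unfolding ordw_def by auto

lemma ordw_min: "0 < q \<Longrightarrow> q < ordw \<Longrightarrow> w ^ q \<noteq> 1"
  using not_less_Least unfolding ordw_def by blast

lemma w_pow_mod: "w ^ n = w ^ (n mod ordw)"
proof -
  have "w ^ n = w ^ (ordw * (n div ordw) + n mod ordw)" by (simp only: mult_div_mod_eq)
  also have "\<dots> = (w ^ ordw) ^ (n div ordw) * w ^ (n mod ordw)" by (simp only: power_add power_mult)
  also have "\<dots> = w ^ (n mod ordw)" by (simp add: ordw(2))
  finally show ?thesis .
qed

lemma inj_ordw: "inj_on (\<lambda>n. w ^ n) {..<ordw}"
proof (rule inj_onI)
  fix a b assume ab: "a \<in> {..<ordw}" "b \<in> {..<ordw}" "w ^ a = w ^ b"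
  { fix a b :: nat assume "a < b" "b < ordw" "w ^ a = w ^ b"
    have "w ^ a * w ^ (b - a) = w ^ (a + (b - a))" by (simp add: power_add)
    also have "\<dots> = w ^ b" using \<open>a < b\<close> by simp
    finally have "w ^ a * w ^ (b - a) = w ^ a * 1" using \<open>w ^ a = w ^ b\<close> by simp
    then have "w ^ (b - a) = 1" using w_nz by simp
    then have False using ordw_min[of "b - a"] \<open>a < b\<close> \<open>b < ordw\<close> by auto }
  note * = this
  show "a = b" using ab *[of a b] *[of b a] by (cases a b rule: linorder_cases) auto
qed

lemma ordw_N: "ordw = N"
proof -
  have "{x :: 'a. x \<noteq> 0} = (\<lambda>n. w ^ n) ` {..<ordw}"
  proof
    show "{x. x \<noteq> 0} \<subseteq> (\<lambda>n. w ^ n) ` {..<ordw}"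
    proof
      fix x :: 'a assume "x \<in> {x. x \<noteq> 0}"
      then obtain n where "x = w ^ n" using prim unfolding primitive_element_def by auto
      then have "x = w ^ (n mod ordw)" using w_pow_mod by simp
      then show "x \<in> (\<lambda>n. w ^ n) ` {..<ordw}" using ordw(1) by auto
    qed
  qed (auto simp: w_nz)
  then have "N = card ((\<lambda>n. w ^ n) ` {..<ordw})" using card_nz by simp
  also have "\<dots> = ordw" using inj_ordw by (simp add: card_image)
  finally show ?thesis by simp
qed

lemma wN: "w ^ N = 1" using ordw ordw_N by simp

lemma w_pow_modN: "w ^ n = w ^ (n mod N)"
  using w_pow_mod[of n] unfolding ordw_N .

lemma w_eq_iff: "w ^ a = w ^ b \<longleftrightarrow> a mod N = b mod N"
proof
  assume "w ^ a = w ^ b"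
  then have "w ^ (a mod N) = w ^ (b mod N)" using w_pow_modN[of a] w_pow_modN[of b] by argo
  moreover have "a mod N \<in> {..<ordw}" "b mod N \<in> {..<ordw}" using ordw_N N_pos by auto
  ultimately show "a mod N = b mod N" using inj_ordw unfolding inj_on_def by blast
next
  assume "a mod N = b mod N" then show "w ^ a = w ^ b" using w_pow_modN[of a] w_pow_modN[of b] by argo
qed

lemma nz_pow: "x \<noteq> 0 \<Longrightarrow> \<exists>n. x = w ^ n"
  using prim unfolding primitive_element_def by auto

lemma pd_mod: "p ^ d mod N = 1 mod N"
proof -
  have "p ^ d \<ge> 1" using p_ge2 by simp
  then have "p ^ d = Suc N" unfolding N_def by arith
  moreover have "Suc N mod N = Suc 0 mod N" by (metis mod_Suc_eq mod_self)
  ultimately show ?thesis by simp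
qed

lemma pow_pd: "(x :: 'a) ^ (p ^ d) = x"
proof (cases "x = 0")
  case True then show ?thesis using p_ge2 by simp
next
  case False
  then obtain n where n: "x = w ^ n" using nz_pow by blast
  have "(n * p ^ d) mod N = n mod N" using pd_mod by (metis mod_mult_right_eq mult.right_neutral)
  then show ?thesis unfolding n power_mult[symmetric] using w_eq_iff by blast
qed

lemma pow_pdq: "(x :: 'a) ^ (p ^ (d * q)) = x"
proof (induction q)
  case 0 then show ?case by simp
next
  case (Suc q)
  have "x ^ (p ^ (d * Suc q)) = (x ^ (p ^ (d * q))) ^ (p ^ d)"
    by (simp add: power_add power_mult[symmetric] mult.commute)
  then show ?case using Suc pow_pd by simp
qed

lemma pow_p_mod: "(x :: 'a) ^ (p ^ i) = x ^ (p ^ (i mod d))"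
proof -
  have "x ^ (p ^ i) = (x ^ (p ^ (d * (i div d)))) ^ (p ^ (i mod d))"
    by (metis div_mult_mod_eq mult.commute power_add power_mult)
  then show ?thesis using pow_pdq by simp
qed

end


context GL begin

lemma T_apply: "T a i x = w ^ a * x ^ (p ^ i)" by (simp add: T_def)

lemma T_comp: "T a i \<circ> T b j = T (a + p ^ i * b) (i + j)"
proof
  fix x
  have "(T a i \<circ> T b j) x = w ^ a * (w ^ b * x ^ (p ^ j)) ^ (p ^ i)" by (simp add: T_def)
  also have "\<dots> = w ^ a * w ^ (p ^ i * b) * x ^ (p ^ j * p ^ i)"
    by (simp add: power_mult_distrib power_mult[symmetric] mult.commute)
  also have "\<dots> = T (a + p ^ i * b) (i + j) x"
    by (simp add: T_def power_add mult.commute)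
  finally show "(T a i \<circ> T b j) x = T (a + p ^ i * b) (i + j) x" .
qed

lemma T_comp_apply: "T a i (T b j x) = T (a + p ^ i * b) (i + j) x"
  using T_comp[of a i b j] by (metis comp_apply)

lemma T_mod: "T a i = T (a mod N) (i mod d)"
proof
  fix x show "T a i x = T (a mod N) (i mod d) x"
    unfolding T_def using w_pow_modN[of a] pow_p_mod[of x i] by argo
qed

lemma T00: "T 0 0 = id" by (auto simp: T_def)

lemma T_zero: "T a i 0 = 0" using p_ge2 by (simp add: T_def)

lemma T_w: "T a i (w ^ t) = w ^ (a + t * p ^ i)"
  by (simp add: T_def power_add power_mult)

lemma pow_lt_N: "i < d \<Longrightarrow> d \<ge> 2 \<Longrightarrow> p ^ i < N"
proof -
  assume "i < d" "d \<ge> 2"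
  have "p ^ i \<le> p ^ (d - 1)" using \<open>i < d\<close> p_ge2 by (intro power_increasing) auto
  moreover have "p ^ (d - 1) \<ge> p ^ 1" using \<open>d \<ge> 2\<close> p_ge2 by (intro power_increasing) auto
  then have "p ^ (d - 1) \<ge> 2" using p_ge2 by simp
  moreover have "p ^ d = p ^ Suc (d - 1)" using d_pos by simp
  then have "p ^ d = p * p ^ (d - 1)" by (simp only: power_Suc)
  moreover have "p * p ^ (d - 1) \<ge> 2 * p ^ (d - 1)" using p_ge2 by simp
  ultimately show "p ^ i < N" unfolding N_def by linarith
qed

lemma T_eq_imp: "T a i = T b j \<Longrightarrow> a mod N = b mod N \<and> i mod d = j mod d"
proof -
  assume eq: "T a i = T b j"
  have "T a i 1 = T b j 1" using eq by simp
  then have ab: "w ^ a = w ^ b" by (simp add: T_def)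
  then have 1: "a mod N = b mod N" using w_eq_iff by blast
  have "\<And>x::'a. x ^ (p ^ i) = x ^ (p ^ j)"
  proof -
    fix x :: 'a
    have "w ^ a * x ^ (p ^ i) = w ^ b * x ^ (p ^ j)" using fun_cong[OF eq, of x] by (simp add: T_def)
    then show "x ^ (p ^ i) = x ^ (p ^ j)" using ab w_nz by simp
  qed
  then have "w ^ (p ^ (i mod d)) = w ^ (p ^ (j mod d))" using pow_p_mod by metis
  then have m: "p ^ (i mod d) mod N = p ^ (j mod d) mod N" using w_eq_iff by blast
  have "i mod d = j mod d"
  proof (cases "d \<ge> 2")
    case True
    have "p ^ (i mod d) < N" "p ^ (j mod d) < N" using pow_lt_N True d_pos by auto
    then have "p ^ (i mod d) = p ^ (j mod d)" using m by simp
    then show ?thesis using p_ge2 by (simp add: power_inject_exp)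
  next
    case False then have "d = 1" using d_pos by simp
    then show ?thesis by simp
  qed
  with 1 show ?thesis by simp
qed

lemma T_eq_iff: "T a i = T b j \<longleftrightarrow> a mod N = b mod N \<and> i mod d = j mod d"
proof
  assume "a mod N = b mod N \<and> i mod d = j mod d"
  then show "T a i = T b j" using T_mod[of a i] T_mod[of b j] by argo
qed (rule T_eq_imp)

lemma omega_pow: "omega_hat w ^^ n = T n 0"
proof (induction n)
  case 0 then show ?case by (simp add: T00)
next
  case (Suc n)
  have "omega_hat w = T 1 0" by (auto simp: omega_hat_def T_def mult.commute)
  then show ?case using Suc by (simp add: T_comp)
qed

lemma frob_pow: "frob p ^^ n = T 0 n"
proof (induction n)
  case 0 then show ?case by (simp add: T00)
next
  case (Suc n)
  have "frob p = T 0 1" by (auto simp: frob_def T_def)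
  then show ?case using Suc by (simp add: T_comp)
qed

lemma gen_subset:
  assumes "id \<in> Cl" "S \<subseteq> Cl" "\<And>f g. f \<in> Cl \<Longrightarrow> g \<in> Cl \<Longrightarrow> f \<circ> g \<in> Cl"
  shows "gen S \<subseteq> Cl"
proof
  fix f assume "f \<in> gen S"
  then show "f \<in> Cl" by (induction rule: gen.induct) (use assms in blast)+
qed

lemma gen_T: "gen {T a0 0, T 0 i0} = {T (a0 * a) (i0 * b) | a b. True}"
proof
  show "gen {T a0 0, T 0 i0} \<subseteq> {T (a0 * a) (i0 * b) | a b. True}"
  proof (rule gen_subset)
    show "id \<in> {T (a0 * a) (i0 * b) | a b. True}" by (auto simp: T00[symmetric] intro!: exI[of _ 0])
    show "{T a0 0, T 0 i0} \<subseteq> {T (a0 * a) (i0 * b) | a b. True}"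
      by (auto, (rule exI[of _ 1], rule exI[of _ 0], simp), (rule exI[of _ 0], rule exI[of _ 1], simp))
    fix f g assume "f \<in> {T (a0 * a) (i0 * b) | a b. True}" "g \<in> {T (a0 * a) (i0 * b) | a b. True}"
    then obtain a b a' b' where "f = T (a0 * a) (i0 * b)" "g = T (a0 * a') (i0 * b')" by blast
    then have "f \<circ> g = T (a0 * (a + p ^ (i0 * b) * a')) (i0 * (b + b'))"
      by (simp add: T_comp algebra_simps)
    then show "f \<circ> g \<in> {T (a0 * a) (i0 * b) | a b. True}" by blast
  qed
next
  have b: "T 0 (i0 * b) \<in> gen {T a0 0, T 0 i0}" for b
  proof (induction b)
    case 0 then show ?case by (simp only: mult_0_right T00 gen.gen_id)
  next
    case (Suc b)
    have "T 0 i0 \<circ> T 0 (i0 * b) \<in> gen {T a0 0, T 0 i0}" by (rule gen_comp) (auto simp: Suc)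
    then show ?case by (simp add: T_comp)
  qed
  have "T (a0 * a) (i0 * b) \<in> gen {T a0 0, T 0 i0}" for a b
  proof (induction a)
    case 0 then show ?case using b by simp
  next
    case (Suc a)
    have "T a0 0 \<circ> T (a0 * a) (i0 * b) \<in> gen {T a0 0, T 0 i0}" by (rule gen_comp) (auto simp: Suc)
    then show ?case by (simp add: T_comp)
  qed
  then show "{T (a0 * a) (i0 * b) | a b. True} \<subseteq> gen {T a0 0, T 0 i0}" by blast
qed

definition G :: "('a \<Rightarrow> 'a) set" where "G = {T a b | a b. True}"

lemma GammaL1_eq: "GammaL1 p w = G"
proof -
  have "GammaL1 p w = gen {T 1 0, T 0 1}"
    unfolding GammaL1_def using omega_pow[of 1] frob_pow[of 1] by simp
  then show ?thesis unfolding G_def gen_T by simp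
qed

lemma G_repr: "f \<in> G \<Longrightarrow> \<exists>a<N. \<exists>i<d. f = T a i"
proof -
  assume "f \<in> G"
  then obtain a i where "f = T a i" unfolding G_def by blast
  then have "f = T (a mod N) (i mod d)" using T_mod by simp
  moreover have "a mod N < N" "i mod d < d" using N_pos d_pos by auto
  ultimately show ?thesis by blast
qed

lemma T_in_G [simp]: "T a i \<in> G" unfolding G_def by blast

lemma T_linv: "T ((N - 1) * p ^ ((d - i mod d)) * a) (d - i mod d) \<circ> T a i = id"
proof -
  let ?j = "d - i mod d"
  have "T ((N - 1) * p ^ ?j * a) ?j \<circ> T a i = T ((N - 1) * p ^ ?j * a + p ^ ?j * a) (?j + i)"
    by (simp add: T_comp)
  also have "\<dots> = T 0 0"
  proof -
    have "(N - 1) * p ^ ?j * a + p ^ ?j * a = N * (p ^ ?j * a)" using N_pos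
      by (cases N) (auto simp: algebra_simps)
    moreover have "(?j + i) mod d = 0"
    proof -
      have "i mod d < d" using d_pos by simp
      moreover have "i = d * (i div d) + i mod d" by simp
      ultimately have "?j + i = d + d * (i div d)" by linarith
      then show ?thesis by simp
    qed
    ultimately show ?thesis by (subst T_eq_iff) simp
  qed
  finally show ?thesis using T00 by simp
qed

lemma group_G: "group (fgroup G)"
proof (rule groupI)
  fix x y assume "x \<in> carrier (fgroup G)" "y \<in> carrier (fgroup G)"
  then show "x \<otimes>\<^bsub>fgroup G\<^esub> y \<in> carrier (fgroup G)"
    unfolding fgroup_def G_def by (fastforce simp: T_comp)
next
  show "\<one>\<^bsub>fgroup G\<^esub> \<in> carrier (fgroup G)" unfolding fgroup_def using T_in_G[of 0 0] by (simp add: T00)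
next
  fix x y z show "x \<otimes>\<^bsub>fgroup G\<^esub> y \<otimes>\<^bsub>fgroup G\<^esub> z = x \<otimes>\<^bsub>fgroup G\<^esub> (y \<otimes>\<^bsub>fgroup G\<^esub> z)"
    unfolding fgroup_def by (simp add: comp_assoc)
next
  fix x show "\<one>\<^bsub>fgroup G\<^esub> \<otimes>\<^bsub>fgroup G\<^esub> x = x" unfolding fgroup_def by simp
next
  fix x assume "x \<in> carrier (fgroup G)"
  then obtain a i where "x = T a i" unfolding fgroup_def G_def by auto
  then show "\<exists>y\<in>carrier (fgroup G). y \<otimes>\<^bsub>fgroup G\<^esub> x = \<one>\<^bsub>fgroup G\<^esub>"
    using T_linv[of i a] unfolding fgroup_def by (auto intro!: bexI[of _ "T _ _"])
qed

end



lemma fgroup_upd: "(fgroup G)\<lparr>carrier := H\<rparr> = fgroup H"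
  by (simp add: fgroup_def)

lemma carrier_fgroup [simp]: "carrier (fgroup H) = H" by (simp add: fgroup_def)
lemma mult_fgroup [simp]: "x \<otimes>\<^bsub>fgroup H\<^esub> y = x \<circ> y" by (simp add: fgroup_def)
lemma one_fgroup [simp]: "\<one>\<^bsub>fgroup H\<^esub> = id" by (simp add: fgroup_def)

lemma card_multiples:
  assumes "r > 0" "r dvd n"
  shows "card {x. x < n \<and> r dvd (x::nat)} = n div r"
proof -
  have "{x. x < n \<and> r dvd x} = (\<lambda>q. r * q) ` {..<n div r}"
  proof
    show "{x. x < n \<and> r dvd x} \<subseteq> (\<lambda>q. r * q) ` {..<n div r}"
    proof
      fix x assume "x \<in> {x. x < n \<and> r dvd x}"
      then obtain q where "x = r * q" "r * q < n" by auto
      moreover have "q < n div r"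
      proof -
        have "r * q < r * (n div r)" using assms \<open>r * q < n\<close> by (simp add: dvd_mult_div_cancel)
        then show ?thesis by simp
      qed
      ultimately show "x \<in> (\<lambda>q. r * q) ` {..<n div r}" by auto
    qed
    show "(\<lambda>q. r * q) ` {..<n div r} \<subseteq> {x. x < n \<and> r dvd x}"
    proof
      fix x assume "x \<in> (\<lambda>q. r * q) ` {..<n div r}"
      then obtain q where "x = r * q" "q < n div r" by auto
      then have "r * q < r * (n div r)" using assms by (intro mult_strict_left_mono) auto
      moreover have "r * (n div r) = n" using assms(2) by simp
      ultimately show "x \<in> {x. x < n \<and> r dvd x}" using \<open>x = r * q\<close> by simp
    qed
  qed
  moreover have "inj_on (\<lambda>q. r * q) {..<n div r}" using assms by (auto simp: inj_on_def)
  ultimately show ?thesis by (simp add: card_image)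
qed

lemma cyclic_sub:
  fixes n :: nat and J :: "nat set"
  assumes n: "n > 0" and sub: "J \<subseteq> {..<n}" and z: "0 \<in> J"
    and cl: "\<And>i j. i \<in> J \<Longrightarrow> j \<in> J \<Longrightarrow> (i + j) mod n \<in> J"
  shows "\<exists>r. r > 0 \<and> r dvd n \<and> J = {i. i < n \<and> r dvd i}"
proof -
  have mult: "(c * i) mod n \<in> J" if "i \<in> J" for i c
  proof (induction c)
    case 0 then show ?case using z by simp
  next
    case (Suc c)
    have "(i + (c * i) mod n) mod n \<in> J" using cl[OF that Suc] .
    then show ?case by (simp add: mod_add_right_eq)
  qed
  define r where "r = Min ({i \<in> J. i > 0} \<union> {n})"
  have "{i \<in> J. i > 0} \<subseteq> {..<n}" using sub by auto
  then have "finite {i \<in> J. i > 0}" by (rule finite_subset) simp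
  then have fin: "finite ({i \<in> J. i > 0} \<union> {n})" by simp
  have r_le: "r \<le> n" unfolding r_def using fin by simp
  have r_min: "r \<le> i" if "i \<in> J" "i > 0" for i unfolding r_def using fin that by simp
  have r_in: "r \<in> {i \<in> J. i > 0} \<union> {n}" unfolding r_def using fin by (intro Min_in) auto
  then have r_pos: "r > 0" using n by auto
  have rJ: "r < n \<Longrightarrow> r \<in> J" using r_in by auto
  have r_dvd: "r dvd n"
  proof (cases "r = n")
    case True then show ?thesis by simp
  next
    case False
    then have "r < n" using r_le by simp
    then have "r \<in> J" using rJ by simp
    show ?thesis
    proof (rule ccontr)
      assume "\<not> r dvd n"
      then have rho: "n mod r > 0" by (simp add: mod_greater_zero_iff_not_dvd)
      define q where "q = n div r"
      have nq: "n = q * r + n mod r" unfolding q_def by simp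
      have "n mod r < r" using r_pos by simp
      then have lo: "n \<le> (q + 1) * r" "(q + 1) * r < 2 * n" using nq \<open>r < n\<close> by (auto simp: algebra_simps)
      then have "((q + 1) * r) mod n = (q + 1) * r - n"
        using lo by (simp add: le_mod_geq)
      also have "\<dots> = r - n mod r" using nq by (simp add: algebra_simps)
      finally have "r - n mod r \<in> J" using mult[OF \<open>r \<in> J\<close>, of "q + 1"] by simp
      moreover have "r - n mod r > 0" "r - n mod r < r" using rho \<open>n mod r < r\<close> by auto
      ultimately show False using r_min by fastforce
    qed
  qed
  have "J = {i. i < n \<and> r dvd i}"
  proof
    show "J \<subseteq> {i. i < n \<and> r dvd i}"
    proof
      fix i assume iJ: "i \<in> J"
      then have "i < n" using sub by auto
      have "r dvd i"
      proof (rule ccontr)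
        assume nd: "\<not> r dvd i"
        then have "i > 0" by (rule contrapos_pp) simp
        then have "r < n" using \<open>i < n\<close> r_min[OF iJ] by simp
        then have "r \<in> J" using rJ by simp
        define c where "c = n div r - i div r"
        have "i div r \<le> n div r" using \<open>i < n\<close> by (simp add: div_le_mono)
        have "i + c * r = i mod r + n"
        proof -
          have "i div r * r \<le> n div r * r" using \<open>i div r \<le> n div r\<close> by simp
          moreover have "n div r * r = n" using r_dvd by simp
          moreover have "i = i div r * r + i mod r" by simp
          moreover have "c * r = n div r * r - i div r * r" unfolding c_def by (simp add: diff_mult_distrib)
          ultimately show ?thesis by linarith
        qed
        have "(i + (c * r) mod n) mod n \<in> J" using cl[OF iJ mult[OF \<open>r \<in> J\<close>]] .
        then have "(i + c * r) mod n \<in> J" by (simp add: mod_add_right_eq)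
        moreover have "i mod r < n" using \<open>r < n\<close> r_pos by (meson mod_less_divisor order.strict_trans)
        ultimately have "(i mod r) \<in> J" using \<open>i + c * r = i mod r + n\<close> by simp
        moreover have "i mod r > 0" "i mod r < r" using nd r_pos by (auto simp: mod_greater_zero_iff_not_dvd)
        ultimately show False using r_min by fastforce
      qed
      then show "i \<in> {i. i < n \<and> r dvd i}" using \<open>i < n\<close> by simp
    qed
    show "{i. i < n \<and> r dvd i} \<subseteq> J"
    proof
      fix i assume "i \<in> {i. i < n \<and> r dvd i}"
      then have "r dvd i" "i < n" by auto
      then obtain c where i: "i = c * r" "i < n" by (metis dvdE mult.commute)
      show "i \<in> J"
      proof (cases "r < n")
        case True
        then show ?thesis using mult[OF rJ[OF True], of c] i by simp
      next
        case False
        then have "r = n" using r_le by simp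
        then have "i = 0" using i by (cases c) auto
        then show ?thesis using z by simp
      qed
    qed
  qed
  then show ?thesis using r_pos r_dvd by blast
qed

context GL begin

lemma finite_fun: "finite (H :: ('a \<Rightarrow> 'a) set)" by simp

lemma sub_props:
  assumes "subgroup H (fgroup G)"
  shows "H \<subseteq> G" "id \<in> H" "\<And>f g. f \<in> H \<Longrightarrow> g \<in> H \<Longrightarrow> f \<circ> g \<in> H" "group (fgroup H)"
  using assms subgroup.subset apply fastforce
  using assms subgroup.one_closed apply fastforce
  using assms subgroup.m_closed apply fastforce
  using subgroup.subgroup_is_group[OF assms group_G] by (simp only: fgroup_upd)

lemma card_pos: "subgroup H (fgroup G) \<Longrightarrow> card H > 0"
  using sub_props(2) by (auto simp: card_gt_0_iff)

lemma T_bij: "bij (T a i)"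
proof -
  have "inj (T a i)"
  proof (rule injI)
    fix x y assume "T a i x = T a i y"
    then have "(T ((N - 1) * p ^ ((d - i mod d)) * a) (d - i mod d) \<circ> T a i) x
       = (T ((N - 1) * p ^ ((d - i mod d)) * a) (d - i mod d) \<circ> T a i) y" by simp
    then show "x = y" unfolding T_linv by simp
  qed
  then show ?thesis using finite_UNIV_inj_surj[of "T a i"] by (simp add: bij_def)
qed

lemma G_bij: "f \<in> G \<Longrightarrow> bij f" using T_bij unfolding G_def by auto

lemma orbit_stab:
  assumes H: "subgroup H (fgroup G)"
  shows "card (orbit H v) * card {h \<in> H. h v = v} = card H"
proof -
  have grp: "group (fgroup H)" using sub_props[OF H] by simp
  have "group_hom (fgroup H) (BijGroup UNIV) (\<lambda>h. h)"
  proof (rule group_hom.intro[OF grp group_BijGroup], rule group_hom_axioms.intro)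
    have Hb: "h \<in> H \<Longrightarrow> h \<in> Bij UNIV" for h using G_bij sub_props(1)[OF H] by (auto simp: Bij_def)
    show "(\<lambda>h. h) \<in> hom (fgroup H) (BijGroup UNIV)"
      unfolding hom_def using Hb sub_props(3)[OF H]
      by (auto simp: BijGroup_def compose_def restrict_UNIV comp_def)
  qed
  then interpret ga: group_action "fgroup H" UNIV "\<lambda>h. h" by (simp add: group_action_def)
  have "card (Group_Action.orbit (fgroup H) (\<lambda>h. h) v) * card (stabilizer (fgroup H) (\<lambda>h. h) v) = order (fgroup H)"
    using ga.orbit_stabilizer_theorem by simp
  moreover have "Group_Action.orbit (fgroup H) (\<lambda>h. h) v = orbit H v"
    unfolding Group_Action.orbit_def orbit_def by simp
  moreover have "stabilizer (fgroup H) (\<lambda>h. h) v = {h \<in> H. h v = v}"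
    unfolding stabilizer_def by simp
  ultimately show ?thesis by (simp add: order_def)
qed

lemma stab_subgroup:
  assumes H: "subgroup H (fgroup G)"
  shows "subgroup {h \<in> H. h v = v} (fgroup G)"
proof (rule subgroup.intro)
  interpret grp: group "fgroup G" by (rule group_G)
  show "{h \<in> H. h v = v} \<subseteq> carrier (fgroup G)" using sub_props(1)[OF H] by auto
  show "x \<otimes>\<^bsub>fgroup G\<^esub> y \<in> {h \<in> H. h v = v}" if "x \<in> {h \<in> H. h v = v}" "y \<in> {h \<in> H. h v = v}" for x y
    using that sub_props(3)[OF H] by auto
  show "\<one>\<^bsub>fgroup G\<^esub> \<in> {h \<in> H. h v = v}" using sub_props(2)[OF H] by simp
  show "inv\<^bsub>fgroup G\<^esub> x \<in> {h \<in> H. h v = v}" if x: "x \<in> {h \<in> H. h v = v}" for x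
  proof -
    have xG: "x \<in> carrier (fgroup G)" using x sub_props(1)[OF H] by auto
    have "inv\<^bsub>fgroup G\<^esub> x \<in> H" using x subgroup.m_inv_closed[OF H] by auto
    moreover have "(inv\<^bsub>fgroup G\<^esub> x \<otimes>\<^bsub>fgroup G\<^esub> x) v = v" using grp.l_inv[OF xG] by simp
    then have "(inv\<^bsub>fgroup G\<^esub> x) v = v" using x by simp
    ultimately show ?thesis by simp
  qed
qed

lemma orbit_zero: "subgroup H (fgroup G) \<Longrightarrow> orbit H 0 = {0}"
proof -
  assume H: "subgroup H (fgroup G)"
  have "h 0 = 0" if "h \<in> H" for h
    using that sub_props(1)[OF H] T_zero unfolding G_def by auto
  then show ?thesis unfolding orbit_def using sub_props(2)[OF H] by force
qed

lemma lagrange_card: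
  assumes K: "subgroup K (fgroup G)" and L: "subgroup L (fgroup G)" and "K \<subseteq> L"
  shows "card L = card L div card K * card K" "card K dvd card L"
proof -
  have "subgroup K (fgroup L)"
    using group.subgroup_incl[OF group_G K L \<open>K \<subseteq> L\<close>] by (simp only: fgroup_upd)
  then have "card (rcosets\<^bsub>fgroup L\<^esub> K) * card K = card L"
    using group.lagrange[OF sub_props(4)[OF L]] by (simp add: order_def)
  then show "card K dvd card L" by (metis dvd_triv_right)
  then show "card L = card L div card K * card K" by simp
qed

lemma exc_extend:
  assumes K: "subgroup K (fgroup G)" and L: "subgroup L (fgroup G)" and "K \<subseteq> L"
    and cop: "coprime (card L div card K) p" and exc: "p_exceptional p K"
  shows "p_exceptional p L"
  unfolding p_exceptional_def
proof
  have "p dvd card K" using exc unfolding p_exceptional_def by simp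
  then show "p dvd card L" using lagrange_card[OF K L \<open>K \<subseteq> L\<close>] dvd_trans by blast
  show "\<forall>v. coprime (card (orbit L v)) p"
  proof
    fix v
    let ?c = "card L div card K"
    let ?SK = "{h \<in> K. h v = v}" and ?SL = "{h \<in> L. h v = v}"
    have sK: "subgroup ?SK (fgroup G)" "subgroup ?SL (fgroup G)"
      using stab_subgroup K L by auto
    have "card ?SK dvd card ?SL" using lagrange_card[OF sK] \<open>K \<subseteq> L\<close> by auto
    then obtain u where u: "card ?SL = card ?SK * u" by blast
    have oK: "card (orbit K v) * card ?SK = card K" using orbit_stab[OF K] .
    have oL: "card (orbit L v) * card ?SL = card L" using orbit_stab[OF L] .
    have cL: "card L = ?c * card K" using lagrange_card[OF K L \<open>K \<subseteq> L\<close>] by simp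
    have "card ?SK > 0" using card_pos[OF sK(1)] .
    have "card (orbit L v) * (card ?SK * u) = card L" using oL u by simp
    then have e1: "card (orbit L v) * u * card ?SK = card L" by (simp add: ac_simps)
    have "card L = ?c * (card (orbit K v) * card ?SK)" using cL oK by simp
    then have e2: "?c * card (orbit K v) * card ?SK = card L" by (simp add: ac_simps)
    have "card (orbit L v) * u * card ?SK = ?c * card (orbit K v) * card ?SK"
      using e1 e2 by simp
    moreover have ne: "card ?SK \<noteq> 0" using \<open>card ?SK > 0\<close> by linarith
    ultimately have "card (orbit L v) * u = ?c * card (orbit K v)" using mult_right_cancel[OF ne] by blast
    then have "card (orbit L v) dvd ?c * card (orbit K v)" by (metis dvd_triv_left)
    moreover have "coprime (?c * card (orbit K v)) p" using cop exc unfolding p_exceptional_def by simp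
    ultimately show "coprime (card (orbit L v)) p" using coprime_imp_coprime dvd_trans
      by (meson coprime_commute coprime_dvd_mult_left_iff)
  qed
qed

end



context GL begin
lemma coprime_N: "coprime N p"
proof -
  have "coprime (p ^ d - 1) (p ^ d)" by (rule coprime_diff_one_left_nat) (use p_ge2 in simp)
  then have "coprime (p ^ d - 1) p \<or> d = 0" by (simp only: coprime_power_right_iff)
  then show ?thesis unfolding N_def using d_pos by simp
qed
end

locale GLK = GL +
  fixes m s :: nat
  assumes m_pos: "m > 0" and m_dvd: "m dvd N" and s_pos: "s > 0" and s_dvd: "s dvd d"
    and hm: "p ^ s mod m = 1 mod m"
begin

definition K :: "('a \<Rightarrow> 'a) set" where "K = {T (m * a) (s * b) | a b. True}"

lemma K_gen: "gen {T m 0, T 0 s} = K" unfolding K_def gen_T by simp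

lemma K_sub_G: "K \<subseteq> G" unfolding K_def G_def by blast

lemma K_subgroup: "subgroup K (fgroup G)"
proof (rule subgroup.intro)
  interpret grp: group "fgroup G" by (rule group_G)
  show "K \<subseteq> carrier (fgroup G)" using K_sub_G by simp
  show "x \<otimes>\<^bsub>fgroup G\<^esub> y \<in> K" if xK: "x \<in> K" and yK: "y \<in> K" for x y
  proof -
    obtain a b a' b' where "x = T (m * a) (s * b)" "y = T (m * a') (s * b')" using xK yK unfolding K_def by blast
    then have "x \<circ> y = T (m * (a + p ^ (s * b) * a')) (s * (b + b'))" by (simp add: T_comp algebra_simps)
    then show ?thesis unfolding K_def by auto
  qed
  show "\<one>\<^bsub>fgroup G\<^esub> \<in> K" unfolding K_def using T00 by (auto intro!: exI[of _ 0])
  show "inv\<^bsub>fgroup G\<^esub> x \<in> K" if x: "x \<in> K" for x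
  proof -
    obtain a b where xe: "x = T (m * a) (s * b)" using x unfolding K_def by blast
    let ?j = "d - (s * b) mod d"
    have "s dvd (s * b) mod d" using s_dvd by (simp add: dvd_mod)
    then have "s dvd ?j" using s_dvd by (simp add: dvd_diff_nat)
    then obtain c where c: "?j = s * c" by blast
    let ?y = "T ((N - 1) * p ^ ?j * (m * a)) ?j"
    have "?y \<circ> x = id" unfolding xe by (rule T_linv)
    then have "inv\<^bsub>fgroup G\<^esub> x = ?y" using xe by (intro grp.inv_equality) auto
    moreover have "?y = T (m * ((N - 1) * p ^ ?j * a)) (s * c)" using c by (simp add: ac_simps)
    ultimately have "inv\<^bsub>fgroup G\<^esub> x = T (m * ((N - 1) * p ^ ?j * a)) (s * c)" by simp
    then show ?thesis unfolding K_def by blast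
  qed
qed

lemma K_card: "card K = (N div m) * (d div s)"
proof -
  have "K = (\<lambda>(a, i). T a i) ` ({a. a < N \<and> m dvd a} \<times> {i. i < d \<and> s dvd i})"
  proof
    show "K \<subseteq> (\<lambda>(a, i). T a i) ` ({a. a < N \<and> m dvd a} \<times> {i. i < d \<and> s dvd i})"
    proof
      fix f assume "f \<in> K"
      then obtain a b where f: "f = T (m * a) (s * b)" unfolding K_def by blast
      then have "f = T ((m * a) mod N) ((s * b) mod d)" using T_mod by simp
      moreover have "m dvd (m * a) mod N" using m_dvd by (simp add: dvd_mod)
      moreover have "s dvd (s * b) mod d" using s_dvd by (simp add: dvd_mod)
      moreover have "(m * a) mod N < N" "(s * b) mod d < d" using N_pos d_pos by auto
      ultimately show "f \<in> (\<lambda>(a, i). T a i) ` ({a. a < N \<and> m dvd a} \<times> {i. i < d \<and> s dvd i})"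
        by auto
    qed
    show "(\<lambda>(a, i). T a i) ` ({a. a < N \<and> m dvd a} \<times> {i. i < d \<and> s dvd i}) \<subseteq> K"
      unfolding K_def by (auto elim!: dvdE)
  qed
  moreover have "inj_on (\<lambda>(a, i). T a i) ({a. a < N \<and> m dvd a} \<times> {i. i < d \<and> s dvd i})"
    by (auto simp: inj_on_def T_eq_iff)
  ultimately have "card K = card ({a. a < N \<and> m dvd a} \<times> {i. i < d \<and> s dvd i})"
    by (simp add: card_image)
  also have "\<dots> = (N div m) * (d div s)"
    using card_multiples[OF m_pos m_dvd] card_multiples[OF s_pos s_dvd] by (simp add: card_cartesian_product)
  finally show ?thesis .
qed

definition R :: "nat \<Rightarrow> 'a set" where "R c = {w ^ u | u. u mod m = c}"

lemma card_res: "c < m \<Longrightarrow> card {u. u < N \<and> u mod m = c} = N div m"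
proof -
  assume c: "c < m"
  have "{u. u < N \<and> u mod m = c} = (\<lambda>x. x + c) ` {x. x < N \<and> m dvd x}"
  proof
    show "{u. u < N \<and> u mod m = c} \<subseteq> (\<lambda>x. x + c) ` {x. x < N \<and> m dvd x}"
    proof
      fix u assume u: "u \<in> {u. u < N \<and> u mod m = c}"
      have "u = m * (u div m) + u mod m" by (rule mult_div_mod_eq[symmetric])
      moreover have uc: "u mod m = c" using u by simp
      ultimately have "u = m * (u div m) + c" by simp
      then show "u \<in> (\<lambda>x. x + c) ` {x. x < N \<and> m dvd x}" using u
        by (intro image_eqI[of _ _ "m * (u div m)"]) auto
    qed
    show "(\<lambda>x. x + c) ` {x. x < N \<and> m dvd x} \<subseteq> {u. u < N \<and> u mod m = c}"
    proof
      fix u assume "u \<in> (\<lambda>x. x + c) ` {x. x < N \<and> m dvd x}"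
      then obtain k where k: "u = m * k + c" "m * k < N" by (auto elim!: dvdE)
      obtain M where M: "N = m * M" using m_dvd by blast
      then have "k < M" using k m_pos by simp
      then have "k + 1 \<le> M" by simp
      then have "m * (k + 1) \<le> m * M" by (rule mult_le_mono2)
      then have "m * k + m \<le> m * M" by simp
      then have "u < N" using k M c by simp
      moreover have "u mod m = c" using k c by simp
      ultimately show "u \<in> {u. u < N \<and> u mod m = c}" by simp
    qed
  qed
  moreover have "inj_on (\<lambda>x. x + c) {x. x < N \<and> m dvd x}" by (auto simp: inj_on_def)
  ultimately show ?thesis using card_multiples[OF m_pos m_dvd] by (simp add: card_image)
qed

lemma R_eq: "c < m \<Longrightarrow> R c = (\<lambda>u. w ^ u) ` {u. u < N \<and> u mod m = c}"
proof
  assume c: "c < m"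
  show "R c \<subseteq> (\<lambda>u. w ^ u) ` {u. u < N \<and> u mod m = c}"
  proof
    fix x assume "x \<in> R c"
    then obtain u where u: "x = w ^ u" "u mod m = c" unfolding R_def by blast
    have "x = w ^ (u mod N)" using u w_pow_modN by simp
    moreover have "u mod N mod m = c" using u mod_mod_cancel[OF m_dvd] by simp
    ultimately show "x \<in> (\<lambda>u. w ^ u) ` {u. u < N \<and> u mod m = c}" using N_pos by auto
  qed
  show "(\<lambda>u. w ^ u) ` {u. u < N \<and> u mod m = c} \<subseteq> R c" unfolding R_def by auto
qed

lemma card_R: "c < m \<Longrightarrow> card (R c) = N div m"
proof -
  assume c: "c < m"
  have "inj_on (\<lambda>u. w ^ u) {u. u < N \<and> u mod m = c}" by (auto simp: inj_on_def w_eq_iff)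
  then show ?thesis using R_eq[OF c] card_res[OF c] by (simp add: card_image)
qed

lemma pow_sb: "p ^ (s * b) mod m = 1 mod m"
proof -
  have "p ^ (s * b) mod m = (p ^ s mod m) ^ b mod m" by (simp add: power_mult power_mod)
  also have "\<dots> = (1 mod m) ^ b mod m" using hm by simp
  also have "\<dots> = 1 mod m" by (simp add: power_mod)
  finally show ?thesis .
qed

lemma K_orbit: "orbit K (w ^ t) = R (t mod m)"
proof
  show "orbit K (w ^ t) \<subseteq> R (t mod m)"
  proof
    fix x assume "x \<in> orbit K (w ^ t)"
    then obtain a b where x: "x = T (m * a) (s * b) (w ^ t)" unfolding orbit_def K_def by blast
    then have "x = w ^ (m * a + t * p ^ (s * b))" by (simp add: T_w)
    moreover have "(m * a + t * p ^ (s * b)) mod m = t mod m"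
    proof -
      have "(m * a + t * p ^ (s * b)) mod m = (t * p ^ (s * b)) mod m" by simp
      also have "\<dots> = (t * (p ^ (s * b) mod m)) mod m" by (simp add: mod_mult_right_eq)
      also have "\<dots> = (t * (1 mod m)) mod m" using pow_sb by simp
      also have "\<dots> = (t * 1) mod m" by (simp only: mod_mult_right_eq)
      also have "\<dots> = t mod m" by simp
      finally show ?thesis .
    qed
    ultimately show "x \<in> R (t mod m)" unfolding R_def by blast
  qed
  show "R (t mod m) \<subseteq> orbit K (w ^ t)"
  proof
    fix x assume "x \<in> R (t mod m)"
    then obtain u where u: "x = w ^ u" "u mod m = t mod m" unfolding R_def by blast
    obtain M where M: "N = m * M" using m_dvd by blast
    then have Mpos: "M > 0" using N_pos by (cases M) auto
    define q where "q = u div m + (M - 1) * (t div m)"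
    have et: "t = m * (t div m) + t mod m" by (rule mult_div_mod_eq[symmetric])
    have "u = m * (u div m) + u mod m" by (rule mult_div_mod_eq[symmetric])
    then have eu: "u = m * (u div m) + t mod m" using u(2) by simp
    have e1: "m * q = m * (u div m) + m * ((M - 1) * (t div m))" unfolding q_def by (simp add: distrib_left)
    have "(M - 1) * (t div m) + t div m = M * (t div m)" using Mpos by (cases M) auto
    then have "m * ((M - 1) * (t div m)) + m * (t div m) = m * (M * (t div m))"
      by (metis distrib_left)
    also have "\<dots> = N * (t div m)" using M by simp
    finally have e2: "m * ((M - 1) * (t div m)) + m * (t div m) = N * (t div m)" .
    have eq: "m * q + t = u + N * (t div m)" using et eu e1 e2 by linarith
    have "T (m * q) 0 (w ^ t) = w ^ (m * q + t)" by (simp add: T_w)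
    also have "\<dots> = w ^ u" unfolding eq by (simp add: power_add power_mult wN)
    finally have "x = T (m * q) 0 (w ^ t)" using u by simp
    moreover have "T (m * q) 0 = T (m * q) (s * 0)" by simp
    then have "T (m * q) 0 \<in> K" unfolding K_def by blast
    ultimately show "x \<in> orbit K (w ^ t)" unfolding orbit_def by blast
  qed
qed

lemma K_orbit_card: "v \<noteq> 0 \<Longrightarrow> card (orbit K v) = N div m"
proof -
  assume "v \<noteq> 0"
  then obtain t where "v = w ^ t" using nz_pow by blast
  moreover have "t mod m < m" using m_pos by simp
  ultimately show ?thesis using K_orbit card_R by simp
qed

lemma K_orbit_zero: "orbit K 0 = {0}" using orbit_zero[OF K_subgroup] .

lemma K_nonzero_orbits: "nonzero_orbits K = R ` {..<m}"
proof
  show "nonzero_orbits K \<subseteq> R ` {..<m}"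
  proof
    fix Ob assume "Ob \<in> nonzero_orbits K"
    then obtain v where v: "Ob = orbit K v" "v \<noteq> 0" unfolding nonzero_orbits_def by blast
    then obtain t where "v = w ^ t" using nz_pow by blast
    then show "Ob \<in> R ` {..<m}" using v K_orbit m_pos by auto
  qed
  show "R ` {..<m} \<subseteq> nonzero_orbits K"
  proof
    fix Ob assume "Ob \<in> R ` {..<m}"
    then obtain c where c: "c < m" "Ob = R c" by auto
    then have "Ob = orbit K (w ^ c)" using K_orbit by simp
    then show "Ob \<in> nonzero_orbits K" unfolding nonzero_orbits_def using w_nz by auto
  qed
qed

lemma card_nonzero_orbits: "card (nonzero_orbits K) = m"
proof -
  have "inj_on R {..<m}"
  proof (rule inj_onI)
    fix c c' assume cc: "c \<in> {..<m}" "c' \<in> {..<m}" "R c = R c'"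
    have "w ^ c \<in> R c" unfolding R_def using cc by auto
    then have "w ^ c \<in> R c'" using cc by simp
    then obtain u where u: "w ^ c = w ^ u" "u mod m = c'" unfolding R_def by blast
    then have "c mod N = u mod N" using w_eq_iff by blast
    then have "c mod N mod m = u mod N mod m" by simp
    then have "c mod m = u mod m" by (simp add: mod_mod_cancel[OF m_dvd])
    then show "c = c'" using u cc by simp
  qed
  then show ?thesis using K_nonzero_orbits by (simp add: card_image)
qed

lemma K_half: "half_transitive K"
  unfolding half_transitive_def using K_orbit_card by simp

lemma K_exc: "p dvd (d div s) \<Longrightarrow> p_exceptional p K"
  unfolding p_exceptional_def
proof
  assume "p dvd d div s"
  then show "p dvd card K" using K_card by simp
  show "\<forall>v. coprime (card (orbit K v)) p"
  proof
    fix v :: 'a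
    show "coprime (card (orbit K v)) p"
    proof (cases "v = 0")
      case True then show ?thesis using K_orbit_zero by simp
    next
      case False
      then have "card (orbit K v) = N div m" by (rule K_orbit_card)
      moreover have "N = (N div m) * m" using m_dvd by simp
      then have "coprime ((N div m) * m) p" using coprime_N by simp
      ultimately show ?thesis by simp
    qed
  qed
qed

end



lemma aux_cancel: "(C::nat) * (Q * P) = Z * (P * t) \<Longrightarrow> P > 0 \<Longrightarrow> C * Q = Z * t"
proof -
  assume "C * (Q * P) = Z * (P * t)" "P > 0"
  then have "(C * Q) * P = (Z * t) * P" by (simp add: ac_simps)
  then show ?thesis using \<open>P > 0\<close> by simp
qed

context GL begin

lemma T_idx_mod: "T a i = T a (i mod d)"
  by (simp add: T_eq_iff)

lemma part1:
  assumes H: "subgroup H (fgroup G)" and exc: "p_exceptional p H"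
  shows "p dvd d \<and> (\<exists>k s j. k \<ge> 1 \<and> d = p ^ k * s \<and> j dvd p ^ s - 1 \<and>
           (let K = gen {T ((p ^ s - 1) div j) 0, T 0 s}
            in K \<lhd> fgroup H \<and> coprime (card H div card K) p))"
proof -
  note HG = sub_props(1)[OF H] and Hid = sub_props(2)[OF H] and Hc = sub_props(3)[OF H]
    and Hgrp = sub_props(4)[OF H]
  have H00: "T 0 0 \<in> H" by (subst T00, rule Hid)
  have pH: "p dvd card H" and orbc: "\<And>v. coprime (card (orbit H v)) p"
    using exc unfolding p_exceptional_def by auto
  have Hpow: "T 0 (i * c) \<in> H" if "T 0 i \<in> H" for i c
  proof (induction c)
    case 0 then show ?case using H00 by simp
  next
    case (Suc c)
    have "T 0 i \<circ> T 0 (i * c) \<in> H" using Hc[OF that Suc] .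
    then show ?case by (simp add: T_comp add.commute)
  qed
  have T_repr: "\<exists>a<N. \<exists>i<d. h = T a i" if "h \<in> H" for h using G_repr HG that by blast
  define J1 where "J1 = {i. i < d \<and> T 0 i \<in> H}"
  have "\<exists>r. r > 0 \<and> r dvd d \<and> J1 = {i. i < d \<and> r dvd i}"
  proof (rule cyclic_sub[OF d_pos])
    show "J1 \<subseteq> {..<d}" unfolding J1_def by auto
    show "0 \<in> J1" unfolding J1_def using H00 d_pos by simp
    fix i j assume "i \<in> J1" "j \<in> J1"
    then have "T 0 i \<circ> T 0 j \<in> H" using Hc unfolding J1_def by auto
    then have "T 0 ((i + j) mod d) \<in> H" by (simp add: T_comp T_idx_mod[of 0 "i + j"])
    then show "(i + j) mod d \<in> J1" unfolding J1_def using d_pos by simp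
  qed
  then obtain r1 where r1: "r1 > 0" "r1 dvd d" "J1 = {i. i < d \<and> r1 dvd i}" by blast
  have stab1: "{h \<in> H. h 1 = 1} = T 0 ` J1"
  proof
    show "{h \<in> H. h 1 = 1} \<subseteq> T 0 ` J1"
    proof
      fix h assume h: "h \<in> {h \<in> H. h 1 = 1}"
      then obtain a i where ai: "a < N" "i < d" "h = T a i" using T_repr by blast
      then have "w ^ a = w ^ 0" using h by (simp add: T_def)
      then have "a mod N = 0 mod N" by (simp only: w_eq_iff)
      then have "a = 0" using ai by simp
      then show "h \<in> T 0 ` J1" using ai h unfolding J1_def by auto
    qed
    show "T 0 ` J1 \<subseteq> {h \<in> H. h 1 = 1}" unfolding J1_def by (auto simp: T_def)
  qed
  have "inj_on (T 0) J1" unfolding J1_def by (auto simp: inj_on_def T_eq_iff)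
  then have cs1: "card {h \<in> H. h 1 = 1} = d div r1"
    using stab1 r1 card_multiples[OF r1(1) r1(2)] by (simp add: card_image)
  define e where "e = d div r1"
  have de: "d = r1 * e" unfolding e_def using r1 by simp
  have cH1: "card H = card (orbit H 1) * e" using orbit_stab[OF H, of 1] cs1 e_def by simp
  have "p dvd e"
  proof -
    have "p dvd card (orbit H 1) * e" using pH cH1 by simp
    moreover have "coprime p (card (orbit H 1))" using orbc[of 1] by (simp add: coprime_commute)
    ultimately show ?thesis using coprime_dvd_mult_right_iff by blast
  qed
  have e0: "e \<noteq> 0" using de d_pos by auto
  have nu: "\<not> is_unit p" using p_ge2 by simp
  define k where "k = multiplicity p e"
  define t where "t = e div p ^ k"
  have et: "e = p ^ k * t" unfolding t_def k_def using multiplicity_dvd[of p e] by (simp add: dvd_mult_div_cancel)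
  have k1: "k \<ge> 1" using multiplicity_gt_zero_iff[OF e0 nu] \<open>p dvd e\<close> unfolding k_def by simp
  have tcop: "coprime t p"
    using prime_imp_coprime[OF prime multiplicity_decompose[OF e0 nu]] unfolding t_def k_def
    by (simp add: coprime_commute)
  define s where "s = r1 * t"
  have ds: "d = p ^ k * s" unfolding s_def using de et by (simp add: mult.left_commute)
  have s_pos: "s > 0" using ds d_pos by (cases s) auto
  have "p ^ k \<ge> p ^ 1" using k1 p_ge2 by (intro power_increasing) auto
  then have pk2: "p ^ k \<ge> 2" using p_ge2 by simp
  have "2 * s \<le> p ^ k * s" using pk2 by (rule mult_le_mono1)
  then have s_lt: "s < d" using ds s_pos by linarith
  have s_dvd: "s dvd d" using ds by simp
  have "s \<in> J1" using r1(3) s_lt by (simp add: s_def)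
  then have Ts: "T 0 s \<in> H" unfolding J1_def by simp
  define J2 where "J2 = {i. i < d \<and> (\<exists>a. T a i \<in> H \<and> T a i w = w)}"
  have "\<exists>r. r > 0 \<and> r dvd d \<and> J2 = {i. i < d \<and> r dvd i}"
  proof (rule cyclic_sub[OF d_pos])
    show "J2 \<subseteq> {..<d}" unfolding J2_def by auto
    have "T 0 0 w = w" by (simp add: T_def)
    then show "0 \<in> J2" unfolding J2_def using H00 d_pos by blast
    fix i j assume "i \<in> J2" "j \<in> J2"
    then obtain a b where ab: "T a i \<in> H" "T a i w = w" "T b j \<in> H" "T b j w = w" unfolding J2_def by auto
    then have "T a i \<circ> T b j \<in> H" using Hc by auto
    then have "T (a + p ^ i * b) ((i + j) mod d) \<in> H" by (simp add: T_comp T_idx_mod[of _ "i + j"])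
    moreover have "T (a + p ^ i * b) ((i + j) mod d) w = w"
      using ab by (simp add: T_comp_apply[symmetric] T_idx_mod[of _ "i + j", symmetric])
    ultimately show "(i + j) mod d \<in> J2" unfolding J2_def using d_pos by auto
  qed
  then obtain r2 where r2: "r2 > 0" "r2 dvd d" "J2 = {i. i < d \<and> r2 dvd i}" by blast
  define ix where "ix h = (SOME i. i < d \<and> (\<exists>a. h = T a i))" for h
  have ix: "ix h < d \<and> (\<exists>a. h = T a (ix h))" if "h \<in> H" for h
  proof -
    have "\<exists>i. i < d \<and> (\<exists>a. h = T a i)" using T_repr[OF that] by blast
    then show ?thesis unfolding ix_def by (rule someI_ex)
  qed
  have fixw_eq: "T a i = T a' i" if "T a i w = w" "T a' i w = w" for a a' i
  proof -
    have "w ^ a * w ^ (p ^ i) = w ^ a' * w ^ (p ^ i)" using that by (simp add: T_def)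
    then have "w ^ a = w ^ a'" using w_nz by simp
    then show ?thesis using w_eq_iff by (simp add: T_eq_iff)
  qed
  have "inj_on ix {h \<in> H. h w = w}"
  proof (rule inj_onI)
    fix h1 h2 assume h: "h1 \<in> {h \<in> H. h w = w}" "h2 \<in> {h \<in> H. h w = w}" "ix h1 = ix h2"
    obtain a1 where a1: "h1 = T a1 (ix h1)" using ix h by blast
    obtain a2 where a2: "h2 = T a2 (ix h2)" using ix h by blast
    have "T a1 (ix h1) w = w" "T a2 (ix h1) w = w" using h a1 a2 by auto
    then have "T a1 (ix h1) = T a2 (ix h1)" by (rule fixw_eq)
    then show "h1 = h2" using a1 a2 h(3) by simp
  qed
  moreover have "ix ` {h \<in> H. h w = w} = J2"
  proof
    show "ix ` {h \<in> H. h w = w} \<subseteq> J2"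
    proof
      fix i assume "i \<in> ix ` {h \<in> H. h w = w}"
      then obtain h where h: "h \<in> H" "h w = w" "i = ix h" by blast
      then obtain a where "h = T a i" "i < d" using ix by blast
      then show "i \<in> J2" unfolding J2_def using h by blast
    qed
    show "J2 \<subseteq> ix ` {h \<in> H. h w = w}"
    proof
      fix i assume "i \<in> J2"
      then obtain a where a: "i < d" "T a i \<in> H" "T a i w = w" unfolding J2_def by auto
      then obtain a' where a': "T a i = T a' (ix (T a i))" "ix (T a i) < d" using ix by blast
      then have "i mod d = ix (T a i) mod d" using T_eq_iff by blast
      then have "ix (T a i) = i" using a a' by simp
      then show "i \<in> ix ` {h \<in> H. h w = w}" using a by force
    qed
  qed
  ultimately have "card {h \<in> H. h w = w} = card J2" using card_image by fastforce
  then have cs2: "card {h \<in> H. h w = w} = d div r2"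
    using card_multiples[OF r2(1) r2(2)] r2(3) by simp
  have "p ^ k dvd card {h \<in> H. h w = w}"
  proof -
    have "card H = card (orbit H w) * card {h \<in> H. h w = w}" using orbit_stab[OF H] by simp
    moreover have "p ^ k dvd card H" using cH1 et by simp
    moreover have "coprime (p ^ k) (card (orbit H w))" using orbc[of w] by (simp add: coprime_commute)
    ultimately have "p ^ k dvd card (orbit H w) * card {h \<in> H. h w = w}"
      "coprime (p ^ k) (card (orbit H w))" by simp_all
    then show ?thesis using coprime_dvd_mult_right_iff by blast
  qed
  then obtain c where c: "d div r2 = p ^ k * c" using cs2 by (auto elim!: dvdE)
  have "d = r2 * (d div r2)" using r2 by simp
  then have "d = r2 * (p ^ k * c)" using c by simp
  then have "p ^ k * s = p ^ k * (r2 * c)" using ds by (simp add: ac_simps)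
  then have "s = r2 * c" using p_ge2 by simp
  then have "s \<in> J2" using r2 s_lt by auto
  then obtain \<alpha> where \<alpha>: "T \<alpha> s \<in> H" "T \<alpha> s w = w" unfolding J2_def by auto
  have "T \<alpha> s \<circ> T 0 (s * (p ^ k - 1)) \<in> H" using Hc[OF \<alpha>(1) Hpow[OF Ts]] .
  moreover have "s + s * (p ^ k - 1) = d"
  proof -
    have "s + s * (p ^ k - 1) = s * (1 + (p ^ k - 1))" by (simp add: distrib_left)
    also have "\<dots> = s * p ^ k" using pk2 by (metis le_add_diff_inverse le_trans one_le_numeral)
    finally show ?thesis using ds by (simp add: ac_simps)
  qed
  ultimately have "T \<alpha> d \<in> H" by (simp add: T_comp)
  then have T\<alpha>0: "T \<alpha> 0 \<in> H" using T_idx_mod[of \<alpha> d] by simp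
  define A where "A = {a. a < N \<and> T a 0 \<in> H}"
  have "\<exists>r. r > 0 \<and> r dvd N \<and> A = {i. i < N \<and> r dvd i}"
  proof (rule cyclic_sub[OF N_pos])
    show "A \<subseteq> {..<N}" unfolding A_def by auto
    show "0 \<in> A" unfolding A_def using H00 N_pos by simp
    fix i j assume "i \<in> A" "j \<in> A"
    then have "T i 0 \<circ> T j 0 \<in> H" using Hc unfolding A_def by auto
    then have "T ((i + j) mod N) 0 \<in> H" using T_mod[of "i + j" 0] by (simp add: T_comp)
    then show "(i + j) mod N \<in> A" unfolding A_def using N_pos by simp
  qed
  then obtain m where m: "m > 0" "m dvd N" "A = {i. i < N \<and> m dvd i}" by blast
  have memA: "T a 0 \<in> H \<longleftrightarrow> m dvd a" for a
  proof -
    have "T a 0 = T (a mod N) 0" using T_mod[of a 0] by simp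
    then have "T a 0 \<in> H \<longleftrightarrow> a mod N \<in> A" unfolding A_def using N_pos by simp
    also have "\<dots> \<longleftrightarrow> m dvd a mod N" using m N_pos by simp
    also have "\<dots> \<longleftrightarrow> m dvd a" using m(2) by (simp add: dvd_mod_iff)
    finally show ?thesis .
  qed
  have "m dvd \<alpha>" using memA T\<alpha>0 by simp
  have e: "w ^ (\<alpha> + p ^ s) = w ^ 1"
  proof -
    have "w ^ (\<alpha> + 1 * p ^ s) = T \<alpha> s (w ^ 1)" by (rule T_w[symmetric])
    also have "\<dots> = w ^ 1" using \<alpha>(2) by simp
    finally show ?thesis by simp
  qed
  then have "(\<alpha> + p ^ s) mod N = 1 mod N" by (simp only: w_eq_iff)
  then have "(\<alpha> + p ^ s) mod N mod m = 1 mod N mod m" by (rule arg_cong[where f="\<lambda>x. x mod m"])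
  then have "(\<alpha> + p ^ s) mod m = 1 mod m" by (simp only: mod_mod_cancel[OF m(2)])
  then have hm: "p ^ s mod m = 1 mod m" using \<open>m dvd \<alpha>\<close> by (simp add: mod_add_left_eq[symmetric])
  interpret KK: GLK p d w m s
    by (unfold_locales) (use m s_pos s_dvd hm in auto)
  have "p ^ s \<ge> 1" using p_ge2 by simp
  then have mdv: "m dvd p ^ s - 1" using hm mod_eq_dvd_iff_nat[where m="p ^ s" and n=1 and q=m] by blast
  define j where "j = (p ^ s - 1) div m"
  have "p ^ s \<ge> p ^ 1" using s_pos p_ge2 by (intro power_increasing) auto
  then have ps1: "p ^ s - 1 > 0" using p_ge2 by simp
  have mj: "p ^ s - 1 = m * j" unfolding j_def using mdv by simp
  then have j_pos: "j > 0" using ps1 by (cases j) auto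
  have jdv: "j dvd p ^ s - 1" using mj by simp
  have jm: "(p ^ s - 1) div j = m" using mj j_pos by simp
  have Keq: "gen {T ((p ^ s - 1) div j) 0, T 0 s} = KK.K" using jm KK.K_gen by simp
  have KH: "KK.K \<subseteq> H"
  proof
    fix f assume "f \<in> KK.K"
    then obtain a b where f: "f = T (m * a) (s * b)" unfolding KK.K_def by blast
    have "T (m * a) 0 \<in> H" using memA by simp
    moreover have "T 0 (s * b) \<in> H" using Hpow[OF Ts] .
    ultimately have "T (m * a) 0 \<circ> T 0 (s * b) \<in> H" using Hc by blast
    then show "f \<in> H" using f by (simp add: T_comp)
  qed
  have charK: "z \<in> KK.K" if zH: "z \<in> H" and zT: "z = T a i" and sdi: "s dvd i" for z a i
  proof -
    obtain q where q: "i = s * q" using sdi by blast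
    have "z \<circ> T 0 (s * (q * (p ^ k - 1))) \<in> H" using Hc[OF zH Hpow[OF Ts]] .
    moreover have "s * q + s * (q * (p ^ k - 1)) = d * q"
    proof -
      have "s * q + s * (q * (p ^ k - 1)) = s * q * (1 + (p ^ k - 1))" by (simp add: algebra_simps)
      also have "\<dots> = s * q * p ^ k" using pk2 by (metis le_add_diff_inverse le_trans one_le_numeral)
      finally show ?thesis using ds by (simp add: ac_simps)
    qed
    ultimately have "T a (d * q) \<in> H" using zT q by (simp add: T_comp)
    then have "T a 0 \<in> H" using T_idx_mod[of a "d * q"] by simp
    then obtain a' where "a = m * a'" using memA by blast
    then show ?thesis using zT q unfolding KK.K_def by blast
  qed
  have KsubH: "subgroup KK.K (fgroup H)"
    using group.subgroup_incl[OF group_G KK.K_subgroup H KH] by (simp only: fgroup_upd)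
  have normal: "KK.K \<lhd> fgroup H"
  proof -
    interpret gH: group "fgroup H" by (rule Hgrp)
    have "\<forall>x\<in>carrier (fgroup H). \<forall>h\<in>KK.K. x \<otimes>\<^bsub>fgroup H\<^esub> h \<otimes>\<^bsub>fgroup H\<^esub> inv\<^bsub>fgroup H\<^esub> x \<in> KK.K"
    proof (intro ballI)
      fix x h assume x: "x \<in> carrier (fgroup H)" and h: "h \<in> KK.K"
      let ?y = "inv\<^bsub>fgroup H\<^esub> x"
      have yH: "?y \<in> H" using gH.inv_closed x by simp
      have yx: "?y \<circ> x = id" using gH.l_inv x by simp
      have xH: "x \<in> H" using x by simp
      obtain b l where bl: "x = T b l" using T_repr[OF xH] by blast
      obtain c l' where cl: "?y = T c l'" using T_repr yH by blast
      obtain a q where aq: "h = T (m * a) (s * q)" using h unfolding KK.K_def by blast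
      have "T (c + p ^ l' * b) (l' + l) = T 0 0" using yx bl cl T00 by (simp add: T_comp)
      then have "(l' + l) mod d = 0" using T_eq_iff by simp
      then have "d dvd l' + l" by (rule mod_0_imp_dvd)
      then have "s dvd l' + l" using s_dvd by (rule dvd_trans[rotated])
      then have "s dvd (l' + l) + s * q" by simp
      moreover have "l + s * q + l' = (l' + l) + s * q" by simp
      ultimately have sd: "s dvd l + s * q + l'" by (simp only:)
      have "x \<circ> h \<circ> ?y = T (b + p ^ l * (m * a) + p ^ (l + s * q) * c) (l + s * q + l')"
        using bl cl aq by (simp add: T_comp algebra_simps)
      moreover have "x \<circ> h \<circ> ?y \<in> H" using Hc x yH KH h by auto
      ultimately show "x \<otimes>\<^bsub>fgroup H\<^esub> h \<otimes>\<^bsub>fgroup H\<^esub> ?y \<in> KK.K" using charK sd by simp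
    qed
    then show ?thesis using gH.normal_inv_iff KsubH by blast
  qed
  have cop: "coprime (card H div card KK.K) p"
  proof -
    let ?c = "card H div card KK.K"
    have cHK: "card H = ?c * card KK.K" using lagrange_card[OF KK.K_subgroup H KH] by simp
    have "d div s = p ^ k" using ds s_pos by simp
    then have cK: "card KK.K = (N div m) * p ^ k" using KK.K_card by simp
    have "?c * ((N div m) * p ^ k) = card (orbit H 1) * (p ^ k * t)" using cHK cK cH1 et
      by (simp only:)
    moreover have "p ^ k > 0" using p_ge2 by simp
    ultimately have "?c * (N div m) = card (orbit H 1) * t" by (rule aux_cancel)
    moreover have "coprime (card (orbit H 1) * t) p" using orbc tcop by simp
    ultimately have "coprime (?c * (N div m)) p" by simp
    then show ?thesis by simp
  qed
  have "p dvd d" using ds k1 by (simp add: dvd_power)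
  then show ?thesis using k1 ds jdv Keq normal cop
    by (intro conjI, simp, intro exI[of _ k] exI[of _ s] exI[of _ j]) (simp add: Let_def)
qed

end



lemma pow_mod_one: "(a::nat) ^ s mod q = 1 mod q \<Longrightarrow> a ^ (s * b) mod q = 1 mod q"
proof -
  assume h: "a ^ s mod q = 1 mod q"
  have "a ^ (s * b) mod q = (a ^ s mod q) ^ b mod q" by (simp add: power_mult power_mod)
  also have "\<dots> = (1 mod q) ^ b mod q" using h by simp
  also have "\<dots> = 1 mod q" by (simp add: power_mod)
  finally show ?thesis .
qed

lemma pow_dvd_pow_minus: "(p::nat) > 0 \<Longrightarrow> s dvd d \<Longrightarrow> p ^ s - 1 dvd p ^ d - 1"
proof -
  assume p: "p > 0" and sd: "s dvd d"
  then obtain b where b: "d = s * b" by blast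
  have "p ^ s mod (p ^ s - 1) = 1 mod (p ^ s - 1)"
  proof -
    have "p ^ s \<ge> 1" using p by simp
    moreover have "p ^ s - 1 dvd p ^ s - 1" by simp
    ultimately show ?thesis using mod_eq_dvd_iff_nat[where m="p ^ s" and n=1 and q="p ^ s - 1"] by blast
  qed
  then have "p ^ (s * b) mod (p ^ s - 1) = 1 mod (p ^ s - 1)" by (rule pow_mod_one)
  moreover have "p ^ (s * b) \<ge> 1" using p by simp
  ultimately show ?thesis using b mod_eq_dvd_iff_nat[where m="p ^ (s * b)" and n=1 and q="p ^ s - 1"] by blast
qed

context GL begin

lemma part2_K:
  assumes k1: "k \<ge> 1" and ds: "d = p ^ k * s" and jd: "j dvd p ^ s - 1"
  shows "GLK p d w ((p ^ s - 1) div j) s" and "p dvd d div s"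
    and "(p ^ s - 1) div j * j = p ^ s - 1" and "j > 0" and "s > 0"
proof -
  show s_pos: "s > 0" using ds d_pos by (cases s) auto
  have "p ^ s \<ge> p ^ 1" using s_pos p_ge2 by (intro power_increasing) auto
  then have ps1: "p ^ s - 1 > 0" using p_ge2 by simp
  then show j_pos: "j > 0" using jd by (cases j) auto
  define m where "m = (p ^ s - 1) div j"
  show mj: "(p ^ s - 1) div j * j = p ^ s - 1" using jd by simp
  then have m_pos: "m > 0" using ps1 unfolding m_def by (cases "(p ^ s - 1) div j") auto
  have mdv: "m dvd p ^ s - 1" using mj unfolding m_def by (metis dvd_triv_left)
  have s_dvd: "s dvd d" using ds by simp
  have "p ^ s - 1 dvd N" unfolding N_def using pow_dvd_pow_minus[OF _ s_dvd] p_ge2 by simp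
  then have m_dvd: "m dvd N" using mdv dvd_trans by blast
  have "p ^ s \<ge> 1" using p_ge2 by simp
  then have hm: "p ^ s mod m = 1 mod m" using mdv mod_eq_dvd_iff_nat[where m="p ^ s" and n=1 and q=m] by blast
  show "GLK p d w ((p ^ s - 1) div j) s"
    using m_pos m_dvd s_pos s_dvd hm unfolding m_def by unfold_locales auto
  show "p dvd d div s" using ds s_pos k1 by (simp add: dvd_power)
qed

lemma part2_exc:
  assumes k1: "k \<ge> 1" and ds: "d = p ^ k * s" and jd: "j dvd p ^ s - 1"
  shows "p_exceptional p (gen {T ((p ^ s - 1) div j) 0, T 0 s})"
proof -
  interpret KK: GLK p d w "(p ^ s - 1) div j" s by (rule part2_K[OF assms])
  show ?thesis using KK.K_gen KK.K_exc part2_K(2)[OF assms] by simp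
qed

lemma part2:
  assumes k1: "k \<ge> 1" and ds: "d = p ^ k * s" and jd: "j dvd p ^ s - 1"
  shows "let K = gen {T ((p ^ s - 1) div j) 0, T 0 s}
         in p_exceptional p K \<and> half_transitive K
            \<and> card (nonzero_orbits K) = (p ^ s - 1) div j
            \<and> (\<forall>v::'a. v \<noteq> 0 \<longrightarrow> card (orbit K v) = j * (p ^ d - 1) div (p ^ s - 1))
            \<and> (\<forall>L. subgroup L (fgroup G) \<and> K \<subseteq> L
                   \<and> coprime (card L div card K) p
                   \<and> L \<inter> gen {T 1 0} = K \<inter> gen {T 1 0}
                   \<longrightarrow> p_exceptional p L)
            \<and> gen {T (p ^ (d div p) - 1) 0, T 0 (d div p)} \<subseteq> K
            \<and> p_exceptional p (gen {T (p ^ (d div p) - 1) 0, T 0 (d div p)})"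
proof -
  interpret KK: GLK p d w "(p ^ s - 1) div j" s by (rule part2_K[OF assms])
  let ?m = "(p ^ s - 1) div j"
  have Keq: "gen {T ?m 0, T 0 s} = KK.K" by (rule KK.K_gen)
  have j_pos: "j > 0" and s_pos: "s > 0" and mj: "?m * j = p ^ s - 1" using part2_K[OF assms] by auto
  have exc: "p_exceptional p KK.K" using KK.K_exc part2_K(2)[OF assms] by simp
  have orb: "card (orbit KK.K v) = j * (p ^ d - 1) div (p ^ s - 1)" if "v \<noteq> 0" for v
  proof -
    have "j * (p ^ d - 1) div (p ^ s - 1) = (j * N) div (j * ?m)" using mj unfolding N_def
      by (simp add: mult.commute)
    also have "\<dots> = N div ?m" using j_pos by simp
    finally show ?thesis using KK.K_orbit_card[OF that] by simp
  qed
  have Lpart: "p_exceptional p L" if "subgroup L (fgroup G)" "KK.K \<subseteq> L" "coprime (card L div card KK.K) p" for L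
    using exc_extend[OF KK.K_subgroup that(1) that(2) that(3) exc] .
  have "p dvd p ^ k" using k1 by (simp add: dvd_power)
  then have dp: "p dvd d" unfolding ds by (rule dvd_mult2)
  have k1': "(1::nat) \<ge> 1" by simp
  have ds': "d = p ^ 1 * (d div p)" using dp by simp
  have "p ^ (d div p) - 1 = (p ^ (d div p) - 1) div 1" by simp
  then have exc2: "p_exceptional p (gen {T (p ^ (d div p) - 1) 0, T 0 (d div p)})"
    using part2_exc[OF k1' ds', of 1] by simp
  have sub2: "gen {T (p ^ (d div p) - 1) 0, T 0 (d div p)} \<subseteq> KK.K"
  proof -
    obtain k' where k': "k = Suc k'" using k1 by (cases k) auto
    have "d = p * (s * p ^ k')" using ds k' by (simp add: ac_simps)
    then have ddp: "d div p = s * p ^ k'" using p_ge2 by simp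
    then have "s dvd d div p" by simp
    then have "p ^ s - 1 dvd p ^ (d div p) - 1" using pow_dvd_pow_minus p_ge2 by simp
    moreover have "?m dvd p ^ s - 1" using mj by (metis dvd_triv_left)
    ultimately have "?m dvd p ^ (d div p) - 1" using dvd_trans by blast
    then obtain c where c: "p ^ (d div p) - 1 = ?m * c" by blast
    show ?thesis unfolding gen_T KK.K_def
    proof (intro subsetI, elim CollectE exE conjE)
      fix f a b assume "f = T ((p ^ (d div p) - 1) * a) (d div p * b)"
      then have "f = T (?m * (c * a)) (s * (p ^ k' * b))" using c ddp by (simp add: ac_simps)
      then show "f \<in> {T (?m * a) (s * b) |a b. True}" by blast
    qed
  qed
  show ?thesis unfolding Let_def Keq
    using exc KK.K_half KK.card_nonzero_orbits orb Lpart sub2 exc2 by blast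
qed

lemma main:
  shows
   "(\<forall>H. subgroup H (fgroup G) \<and> p_exceptional p H \<longrightarrow>
        p dvd d \<and>
        (\<exists>k s j. k \<ge> 1 \<and> d = p ^ k * s \<and> j dvd p ^ s - 1 \<and>
           (let K = gen {T ((p ^ s - 1) div j) 0, T 0 s}
            in K \<lhd> fgroup H \<and> coprime (card H div card K) p)))
    \<and>
    (\<forall>k s j. k \<ge> 1 \<and> d = p ^ k * s \<and> j dvd p ^ s - 1 \<longrightarrow>
        (let K = gen {T ((p ^ s - 1) div j) 0, T 0 s}
         in p_exceptional p K \<and> half_transitive K
            \<and> card (nonzero_orbits K) = (p ^ s - 1) div j
            \<and> (\<forall>v::'a. v \<noteq> 0 \<longrightarrow> card (orbit K v) = j * (p ^ d - 1) div (p ^ s - 1))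
            \<and> (\<forall>L. subgroup L (fgroup G) \<and> K \<subseteq> L
                   \<and> coprime (card L div card K) p
                   \<and> L \<inter> gen {T 1 0} = K \<inter> gen {T 1 0}
                   \<longrightarrow> p_exceptional p L)
            \<and> gen {T (p ^ (d div p) - 1) 0, T 0 (d div p)} \<subseteq> K
            \<and> p_exceptional p (gen {T (p ^ (d div p) - 1) 0, T 0 (d div p)})))"
  using part1 part2 by blast

end

theorem lemma2p7:
  fixes p d :: nat and \<omega> :: "'a::{field, finite}"
  assumes "Factorial_Ring.prime p" and "card (UNIV :: 'a set) = p ^ d" and "primitive_element \<omega>"
  shows
   "(\<forall>H. subgroup H (fgroup (GammaL1 p \<omega>)) \<and> p_exceptional p H \<longrightarrow>
        p dvd d \<and>
        (\<exists>k s j. k \<ge> 1 \<and> d = p ^ k * s \<and> j dvd p ^ s - 1 \<and>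
           (let K = gen {omega_hat \<omega> ^^ ((p ^ s - 1) div j), frob p ^^ s}
            in K \<lhd> fgroup H \<and> coprime (card H div card K) p)))
    \<and>
    (\<forall>k s j. k \<ge> 1 \<and> d = p ^ k * s \<and> j dvd p ^ s - 1 \<longrightarrow>
        (let K = gen {omega_hat \<omega> ^^ ((p ^ s - 1) div j), frob p ^^ s}
         in p_exceptional p K \<and> half_transitive K
            \<and> card (nonzero_orbits K) = (p ^ s - 1) div j
            \<and> (\<forall>v::'a. v \<noteq> 0 \<longrightarrow> card (orbit K v) = j * (p ^ d - 1) div (p ^ s - 1))
            \<and> (\<forall>L. subgroup L (fgroup (GammaL1 p \<omega>)) \<and> K \<subseteq> L
                   \<and> coprime (card L div card K) p
                   \<and> L \<inter> gen {omega_hat \<omega>} = K \<inter> gen {omega_hat \<omega>}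
                   \<longrightarrow> p_exceptional p L)
            \<and> gen {omega_hat \<omega> ^^ (p ^ (d div p) - 1), frob p ^^ (d div p)} \<subseteq> K
            \<and> p_exceptional p (gen {omega_hat \<omega> ^^ (p ^ (d div p) - 1), frob p ^^ (d div p)})))"
proof -
  interpret GL p d \<omega> using assms by unfold_locales
  have o1: "omega_hat \<omega> = T 1 0" using omega_pow[of 1] by simp
  show ?thesis
    unfolding GammaL1_eq omega_pow frob_pow unfolding o1 using main .
qed

end
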